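(* Let $n\ge1$, let $w_{ij}\ge0$ for distinct $i,j\in\{1,\dots,n\}$, and for $a\in\{1,2\}^n$ let $W(a)=\sum_{i=1}^n\sum_{j:a_j\ne a_i}w_{ij}$. Let $a^*\in\arg\max_{a\in\{1,2\}^n}W(a)$. Then for every $a\in\{1,2\}^n$, $$\sum_{i=1}^n\big(W(a)-W(a^*_i,a_{-i})\big)\le 3W(a)-W(a^* ),$$ i.e. the common-interest game with welfare $W$ satisfies the smoothness inequality with $\lambda_c=1$, $\mu_c=3$.
   Context: For $a\in\{1,2\}^n$, $(a^*_i,a_{-i})$ denotes the joint action obtained from $a$ by replacing the $i$-th coordinate $a_i$ with $a^*_i$. *)

theory Defs
  imports "HOL-Library.FuncSet" Complex_Main
begin

definition welfare :: "nat \<Rightarrow> (nat \<Rightarrow> nat \<Rightarrow> real) \<Rightarrow> (nat \<Rightarrow> nat) \<Rightarrow> real" where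
  "welfare n w a = (\<Sum>i\<in>{1..n}. \<Sum>j\<in>{j\<in>{1..n}. a j \<noteq> a i}. w i j)"

end

theory Submission
  imports Defs
begin

definition cc :: "(nat \<Rightarrow> nat \<Rightarrow> real) \<Rightarrow> (nat \<Rightarrow> nat) \<Rightarrow> nat \<Rightarrow> nat \<Rightarrow> real" where
  "cc w a p q = (if a q \<noteq> a p then w p q else 0)"

lemma welfare_cc: "welfare n w a = (\<Sum>p\<in>{1..n}. \<Sum>q\<in>{1..n}. cc w a p q)"
proof -
  have "\<And>p. (\<Sum>j\<in>{j \<in> {1..n}. a j \<noteq> a p}. w p j) = (\<Sum>q\<in>{1..n}. cc w a p q)"
  proof -
    fix p
    have "{j \<in> {1..n}. a j \<noteq> a p} = {1..n} \<inter> {j. a j \<noteq> a p}" by auto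
    then show "(\<Sum>j\<in>{j \<in> {1..n}. a j \<noteq> a p}. w p j) = (\<Sum>q\<in>{1..n}. cc w a p q)"
      by (simp add: sum.inter_restrict cc_def)
  qed
  then show ?thesis unfolding welfare_def by simp
qed

lemma pointwise:
  assumes p: "p \<in> {1..n}" and q: "q \<in> {1..n}" and wpos: "p \<noteq> q \<Longrightarrow> w p q \<ge> 0"
    and a: "a \<in> {1..n} \<rightarrow>\<^sub>E {1::nat,2}" and s: "astar \<in> {1..n} \<rightarrow>\<^sub>E {1,2}"
  shows "(\<Sum>i\<in>{1..n}. cc w a p q - cc w (a(i := astar i)) p q) \<le> 3 * cc w a p q - cc w astar p q"
proof (cases "p = q")
  case True then show ?thesis by (simp add: cc_def)
next
  case False
  have "(\<Sum>i\<in>{1..n}. cc w a p q - cc w (a(i := astar i)) p q)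
      = (\<Sum>i\<in>{p,q}. cc w a p q - cc w (a(i := astar i)) p q)"
    by (rule sum.mono_neutral_right) (use p q in \<open>auto simp: cc_def\<close>)
  also have "\<dots> = (cc w a p q - cc w (a(p := astar p)) p q) + (cc w a p q - cc w (a(q := astar q)) p q)"
    using False by simp
  also have "\<dots> \<le> 3 * cc w a p q - cc w astar p q"
  proof -
    have ap: "a p \<in> {1,2}" "a q \<in> {1,2}" "astar p \<in> {1,2}" "astar q \<in> {1,2}"
      using a s p q by auto
    have w0: "w p q \<ge> 0" using wpos False by simp
    show ?thesis using ap w0 False unfolding cc_def by (auto split: if_splits)
  qed
  finally show ?thesis .
qed

theorem mainTheorem8:
  fixes n :: nat and w :: "nat \<Rightarrow> nat \<Rightarrow> real" and astar :: "nat \<Rightarrow> nat"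
  assumes "n \<ge> 1"
    and "\<And>i j. i \<in> {1..n} \<Longrightarrow> j \<in> {1..n} \<Longrightarrow> i \<noteq> j \<Longrightarrow> w i j \<ge> 0"
    and "astar \<in> {1..n} \<rightarrow>\<^sub>E {1,2}"
    and "\<And>a. a \<in> {1..n} \<rightarrow>\<^sub>E {1,2} \<Longrightarrow> welfare n w a \<le> welfare n w astar"
  shows "\<forall>a \<in> {1..n} \<rightarrow>\<^sub>E {1::nat,2}.
           (\<Sum>i\<in>{1..n}. welfare n w a - welfare n w (a(i := astar i)))
             \<le> 3 * welfare n w a - welfare n w astar"
proof
  fix a assume a: "a \<in> {1..n} \<rightarrow>\<^sub>E {1::nat,2}"
  have "(\<Sum>i\<in>{1..n}. welfare n w a - welfare n w (a(i := astar i)))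
      = (\<Sum>i\<in>{1..n}. \<Sum>p\<in>{1..n}. \<Sum>q\<in>{1..n}. cc w a p q - cc w (a(i := astar i)) p q)"
    by (simp add: welfare_cc sum_subtractf)
  also have "\<dots> = (\<Sum>p\<in>{1..n}. \<Sum>q\<in>{1..n}. \<Sum>i\<in>{1..n}. cc w a p q - cc w (a(i := astar i)) p q)"
    by (subst sum.swap) (rule sum.cong[OF refl], rule sum.swap)
  also have "\<dots> \<le> (\<Sum>p\<in>{1..n}. \<Sum>q\<in>{1..n}. 3 * cc w a p q - cc w astar p q)"
    by (intro sum_mono pointwise[OF _ _ _ a assms(3)]) (auto intro: assms(2))
  also have "\<dots> = 3 * welfare n w a - welfare n w astar"
    by (simp add: welfare_cc sum_subtractf sum_distrib_left)
  finally show "(\<Sum>i\<in>{1..n}. welfare n w a - welfare n w (a(i := astar i)))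
             \<le> 3 * welfare n w a - welfare n w astar" .
qed

end
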